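(* Let $\mathcal{M},\mathcal{N}\subset\mathbb{R}^n$ be two manifolds that are $\mathcal{C}^k$-smooth ($k\geq 2$) around a point $\bar{x}\in\mathcal{M}\cap\mathcal{N}$, such that $\mathcal{M}\cap\mathcal{N}$ is a $\mathcal{C}^k$-smooth manifold around $\bar{x}$ and $\mathrm{T}_{\mathcal{M}\cap\mathcal{N}}(\bar{x})=\mathrm{T}_{\mathcal{M}}(\bar{x})\cap\mathrm{T}_{\mathcal{N}}(\bar{x})$. Let the parameters satisfy $\alpha\in(0,1]$, $\alpha_1,\alpha_2\in(0,2]$ and either (B1) $\alpha_1,\alpha_2\in(0,2)$, or (B2) $\alpha\in(0,1)$ with $\alpha_1\neq 2$ or $\alpha_2\neq 2$. Define $S_{\mathrm{T}(\bar{x})}\coloneqq(1-\alpha)I+\alpha\,\Pi^{\alpha_2}_{\mathrm{T}_{\mathcal{M}}(\bar{x})}\Pi^{\alpha_1}_{\mathrm{T}_{\mathcal{N}}(\bar{x})}$. Then \[ \mathrm{T}_{\mathcal{M}\cap\mathcal{N}}(\bar{x})=\mathrm{T}_{\mathcal{M}}(\bar{x})\cap\mathrm{T}_{\mathcal{N}}(\bar{x})=\mathrm{fix}\, S_{\mathrm{T}(\bar{x})} \] and \[ \Pi_{\mathrm{fix}\, S_{\mathrm{T}(\bar{x})}}=S_{\mathrm{T}(\bar{x})}^\infty , \] where $S^\infty\coloneqq\lim_{k\to\infty}S^k$.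
   Context: For a closed nonempty set $C$, $\Pi_C$ is the (unique) projection and $\Pi_C^{\alpha}\coloneqq(1-\alpha)I+\alpha\Pi_C$ is the relaxed projection. For a manifold $\mathcal{M}$ given locally as $\{x: F(x)=0\}$ with $F$ of class $\mathcal{C}^k$ with surjective derivative, the tangent space is $\mathrm{T}_{\mathcal{M}}(x)=\ker \mathrm{J}F(x)$. $\mathrm{fix}\,S\coloneqq\{x\mid Sx=x\}$. *)

theory Defs
  imports "HOL-Analysis.Analysis"
begin

text \<open>C^k smoothness on an open set U: all (Frechet-)directional derivatives up to
order k exist and are continuous on U (equivalently: all partial derivatives up to
order k exist and are continuous).\<close>
fun Ck_on :: "nat \<Rightarrow> 'a::real_normed_vector set \<Rightarrow> ('a \<Rightarrow> 'b::real_normed_vector) \<Rightarrow> bool" where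
  "Ck_on 0 U f = continuous_on U f"
| "Ck_on (Suc k) U f =
     ((\<forall>x\<in>U. f differentiable (at x)) \<and>
      (\<forall>v. Ck_on k U (\<lambda>x. frechet_derivative f (at x) v)))"

definition local_manifold_rep ::
  "nat \<Rightarrow> 'a::euclidean_space set \<Rightarrow> ('a \<Rightarrow> 'b::euclidean_space) \<Rightarrow> 'a set \<Rightarrow> 'a \<Rightarrow> bool" where
  "local_manifold_rep k M F U x \<longleftrightarrow>
     open U \<and> x \<in> U \<and> Ck_on k U F \<and> M \<inter> U = {y\<in>U. F y = 0} \<and>
     (\<forall>y\<in>U. surj (frechet_derivative F (at y)))"

definition tangent_space :: "('a::euclidean_space \<Rightarrow> 'b::euclidean_space) \<Rightarrow> 'a \<Rightarrow> 'a set" where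
  "tangent_space F x = {v. frechet_derivative F (at x) v = 0}"

definition rproj :: "real \<Rightarrow> 'a::euclidean_space set \<Rightarrow> 'a \<Rightarrow> 'a" where
  "rproj a C x = (1 - a) *\<^sub>R x + a *\<^sub>R closest_point C x"

definition fixset :: "('a \<Rightarrow> 'a) \<Rightarrow> 'a set" where
  "fixset S = {x. S x = x}"

end

theory Submission
  imports Defs
begin

lemma proj_basic:
  fixes A :: "'a::euclidean_space set"
  assumes "subspace A"
  shows "closed A" "A \<noteq> {}" "closest_point A x \<in> A"
proof -
  show cl: "closed A" using assms(1) closed_subspace by blast
  show ne: "A \<noteq> {}" using assms(1) subspace_0 by blast
  show "closest_point A x \<in> A" using closest_point_in_set[OF cl ne] .
qed

lemma proj_orth:
  fixes A :: "'a::euclidean_space set"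
  assumes "subspace A" "y \<in> A"
  shows "inner (x - closest_point A x) y = 0"
proof -
  let ?p = "closest_point A x"
  have p: "?p \<in> A" using proj_basic[OF assms(1)] by blast
  have "?p + y \<in> A" "?p - y \<in> A" using subspace_add subspace_diff assms p by blast+
  then have "inner (x - ?p) (?p + y - ?p) \<le> 0" "inner (x - ?p) (?p - y - ?p) \<le> 0"
    using closest_point_dot[OF subspace_imp_convex[OF assms(1)] proj_basic(1)[OF assms(1)]] by blast+
  then show ?thesis by (simp add: inner_diff_right)
qed

lemma proj_char:
  fixes A :: "'a::euclidean_space set"
  assumes "subspace A" "p \<in> A" "\<And>y. y \<in> A \<Longrightarrow> inner (x - p) y = 0"
  shows "closest_point A x = p"
proof -
  have "dist x p \<le> dist x z" if z: "z \<in> A" for z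
  proof -
    have "p - z \<in> A" using subspace_diff assms z by blast
    then have "orthogonal (x - p) (p - z)" using assms(3) unfolding orthogonal_def by blast
    then have "(norm (x - p + (p - z)))\<^sup>2 = (norm (x - p))\<^sup>2 + (norm (p - z))\<^sup>2"
      by (rule norm_add_Pythagorean)
    moreover have "x - p + (p - z) = x - z" by simp
    ultimately have "(norm (x - p))\<^sup>2 \<le> (norm (x - z))\<^sup>2" by simp
    then have "norm (x - p) \<le> norm (x - z)" by (rule power2_le_imp_le) simp
    then show ?thesis by (simp only: dist_norm)
  qed
  then have "\<forall>z\<in>A. dist x p \<le> dist x z" by blast
  then show ?thesis
    using closest_point_unique[OF subspace_imp_convex[OF assms(1)] proj_basic(1)[OF assms(1)] assms(2)]
    by simp
qed

lemma proj_linear: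
  fixes A :: "'a::euclidean_space set"
  assumes "subspace A"
  shows "linear (closest_point A)"
proof (rule linearI)
  fix x y :: 'a
  show "closest_point A (x + y) = closest_point A x + closest_point A y"
  proof (rule proj_char[OF assms])
    show "closest_point A x + closest_point A y \<in> A"
      using proj_basic[OF assms] subspace_add[OF assms] by blast
    fix z assume z: "z \<in> A"
    have "inner (x + y - (closest_point A x + closest_point A y)) z
        = inner (x - closest_point A x) z + inner (y - closest_point A y) z"
      by (simp add: inner_diff_left inner_add_left)
    then show "inner (x + y - (closest_point A x + closest_point A y)) z = 0"
      using proj_orth[OF assms z] by simp
  qed
next
  fix r and x :: 'a
  show "closest_point A (r *\<^sub>R x) = r *\<^sub>R closest_point A x"
  proof (rule proj_char[OF assms])
    show "r *\<^sub>R closest_point A x \<in> A"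
      using proj_basic[OF assms] subspace_scale[OF assms] by blast
    fix z assume z: "z \<in> A"
    have "inner (r *\<^sub>R x - r *\<^sub>R closest_point A x) z = r * inner (x - closest_point A x) z"
      by (simp add: inner_diff_left algebra_simps)
    then show "inner (r *\<^sub>R x - r *\<^sub>R closest_point A x) z = 0"
      using proj_orth[OF assms z] by simp
  qed
qed

lemma rproj_linear:
  fixes A :: "'a::euclidean_space set"
  assumes "subspace A"
  shows "linear (rproj a A)"
  using proj_linear[OF assms] unfolding rproj_def
  by (intro linearI) (simp_all add: linear_add linear_scale algebra_simps)

lemma rproj_norm:
  fixes A :: "'a::euclidean_space set"
  assumes "subspace A"
  shows "(norm (rproj a A y))\<^sup>2 = (norm y)\<^sup>2 - a * (2 - a) * (norm (y - closest_point A y))\<^sup>2"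
proof -
  let ?p = "closest_point A y"
  let ?d = "y - ?p"
  have o: "inner ?d ?p = 0" using proj_orth[OF assms proj_basic(3)[OF assms]] .
  have e1: "rproj a A y = ?p + (1 - a) *\<^sub>R ?d" unfolding rproj_def by (simp add: algebra_simps)
  have "orthogonal ?p ((1 - a) *\<^sub>R ?d)" using o unfolding orthogonal_def by (simp add: inner_commute)
  then have n1: "(norm (rproj a A y))\<^sup>2 = (norm ?p)\<^sup>2 + (1-a)\<^sup>2 * (norm ?d)\<^sup>2"
    unfolding e1 by (simp add: norm_add_Pythagorean power_mult_distrib)
  have "orthogonal ?p ?d" using o unfolding orthogonal_def by (simp add: inner_commute)
  then have n2: "(norm y)\<^sup>2 = (norm ?p)\<^sup>2 + (norm ?d)\<^sup>2"
    using norm_add_Pythagorean[of ?p ?d] by simp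
  show ?thesis using n1 n2 by (simp add: power2_eq_square algebra_simps)
qed

lemma rproj_inner:
  fixes A :: "'a::euclidean_space set"
  assumes "subspace A" "f \<in> A"
  shows "inner (rproj a A y) f = inner y f"
proof -
  have "rproj a A y = y - a *\<^sub>R (y - closest_point A y)" unfolding rproj_def by (simp add: algebra_simps)
  then show ?thesis using proj_orth[OF assms] by (simp add: inner_diff_left)
qed

lemma rproj_self:
  fixes A :: "'a::euclidean_space set"
  assumes "y \<in> A"
  shows "rproj a A y = y"
  using closest_point_self[OF assms] unfolding rproj_def by (simp add: algebra_simps)

lemma conv_norm_id:
  fixes w v :: "'a::real_inner"
  shows "(norm ((1 - t) *\<^sub>R w + t *\<^sub>R v))\<^sup>2
     = (1 - t) * (norm w)\<^sup>2 + t * (norm v)\<^sup>2 - t * (1 - t) * (norm (w - v))\<^sup>2"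
  by (simp add: power2_norm_eq_inner inner_add_left inner_add_right inner_diff_left
      inner_diff_right inner_commute algebra_simps)


lemma rproj_fixD:
  fixes A :: "'a::euclidean_space set"
  assumes "subspace A" "a \<noteq> 0" "rproj a A y = y"
  shows "y \<in> A"
proof -
  have "a *\<^sub>R (closest_point A y - y) = 0" using assms(3) unfolding rproj_def
    by (simp add: algebra_simps)
  then have "closest_point A y = y" using assms(2) by simp
  then show ?thesis using proj_basic(3)[OF assms(1), of y] by simp
qed

lemma main_abstract:
  fixes A B :: "'a::euclidean_space set" and S :: "'a \<Rightarrow> 'a"
  assumes A: "subspace A" and B: "subspace B"
    and p: "0 < \<alpha>" "\<alpha> \<le> 1" "0 < \<alpha>1" "\<alpha>1 \<le> 2" "0 < \<alpha>2" "\<alpha>2 \<le> 2"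
    and c: "(\<alpha>1 < 2 \<and> \<alpha>2 < 2) \<or> (\<alpha> < 1 \<and> (\<alpha>1 \<noteq> 2 \<or> \<alpha>2 \<noteq> 2))"
    and S: "S = (\<lambda>x. (1 - \<alpha>) *\<^sub>R x + \<alpha> *\<^sub>R rproj \<alpha>2 A (rproj \<alpha>1 B x))"
  shows "A \<inter> B = fixset S \<and> (\<forall>x. (\<lambda>j. (S ^^ j) x) \<longlonglongrightarrow> closest_point (fixset S) x)"
proof -
  define R1 where "R1 = rproj \<alpha>1 B"
  define R2 where "R2 = rproj \<alpha>2 A"
  have Sd: "S w = (1 - \<alpha>) *\<^sub>R w + \<alpha> *\<^sub>R R2 (R1 w)" for w
    unfolding S R1_def R2_def by simp
  have linS: "linear S"
  proof -
    have "linear (\<lambda>x. (1 - \<alpha>) *\<^sub>R x + \<alpha> *\<^sub>R R2 (R1 x))"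
      using rproj_linear[OF A, of \<alpha>2] rproj_linear[OF B, of \<alpha>1] unfolding R1_def R2_def
      by (intro linearI) (simp_all add: linear_add linear_scale algebra_simps)
    then show ?thesis using Sd by presburger
  qed
  have normle: "norm (S w) \<le> norm w" and
       key: "norm (S w) = norm w \<Longrightarrow> w \<in> A \<inter> B" for w
  proof -
    define u where "u = R1 w"
    define v where "v = R2 u"
    define a where "a = (norm (w - closest_point B w))\<^sup>2"
    define b where "b = (norm (u - closest_point A u))\<^sup>2"
    define d where "d = (norm (w - v))\<^sup>2"
    have a0: "a \<ge> 0" "b \<ge> 0" "d \<ge> 0" unfolding a_def b_def d_def by simp_all
    have h1: "(norm u)\<^sup>2 = (norm w)\<^sup>2 - \<alpha>1 * (2 - \<alpha>1) * a"
      unfolding u_def R1_def a_def by (rule rproj_norm[OF B])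
    have h2: "(norm v)\<^sup>2 = (norm u)\<^sup>2 - \<alpha>2 * (2 - \<alpha>2) * b"
      unfolding v_def R2_def b_def by (rule rproj_norm[OF A])
    have h3: "(norm (S w))\<^sup>2 = (1 - \<alpha>) * (norm w)\<^sup>2 + \<alpha> * (norm v)\<^sup>2 - \<alpha> * (1 - \<alpha>) * d"
      unfolding Sd d_def v_def u_def by (rule conv_norm_id)
    have k1: "\<alpha>1 * (2 - \<alpha>1) * a \<ge> 0" using p a0 by simp
    have k2: "\<alpha>2 * (2 - \<alpha>2) * b \<ge> 0" using p a0 by simp
    have k3: "\<alpha> * (1 - \<alpha>) * d \<ge> 0" using p a0 by simp
    have vw: "(norm v)\<^sup>2 \<le> (norm w)\<^sup>2" using h1 h2 k1 k2 by linarith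
    have "\<alpha> * (norm v)\<^sup>2 \<le> \<alpha> * (norm w)\<^sup>2" using vw p by (simp add: mult_left_mono)
    moreover have "(norm (S w))\<^sup>2 = (norm w)\<^sup>2 + (\<alpha> * (norm v)\<^sup>2 - \<alpha> * (norm w)\<^sup>2) - \<alpha> * (1 - \<alpha>) * d"
      unfolding h3 by (simp only: left_diff_distrib)
    ultimately have sq: "(norm (S w))\<^sup>2 \<le> (norm w)\<^sup>2" using k3 by linarith
    show "norm (S w) \<le> norm w" using power2_le_imp_le[OF sq] by simp
    assume eq: "norm (S w) = norm w"
    then have "\<alpha> * (norm w)\<^sup>2 = \<alpha> * (norm v)\<^sup>2 - \<alpha> * (1 - \<alpha>) * d"
      using h3 by (simp add: algebra_simps)
    then have e0: "\<alpha> * ((norm v)\<^sup>2 - (norm w)\<^sup>2) = \<alpha> * (1 - \<alpha>) * d" by (simp add: algebra_simps)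
    have "\<alpha> * ((norm v)\<^sup>2 - (norm w)\<^sup>2) \<le> 0" using vw p by (simp add: mult_nonneg_nonpos)
    then have e1: "\<alpha> * (1 - \<alpha>) * d = 0" and e2': "\<alpha> * ((norm v)\<^sup>2 - (norm w)\<^sup>2) = 0"
      using e0 k3 by linarith+
    have e2: "(norm v)\<^sup>2 = (norm w)\<^sup>2" using e2' p(1) by simp
    have e3: "\<alpha>1 * (2 - \<alpha>1) * a = 0" "\<alpha>2 * (2 - \<alpha>2) * b = 0"
      using e2 h1 h2 k1 k2 by linarith+
    have dv: "\<alpha> < 1 \<Longrightarrow> v = w" using e1 p unfolding d_def by simp
    have wB: "\<alpha>1 < 2 \<Longrightarrow> w \<in> B \<and> u = w"
    proof -
      assume "\<alpha>1 < 2"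
      then have "a = 0" using e3 p by simp
      then have "closest_point B w = w" unfolding a_def by simp
      then have "w \<in> B" using proj_basic(3)[OF B, of w] by simp
      then show ?thesis unfolding u_def R1_def using rproj_self by blast
    qed
    have uA: "\<alpha>2 < 2 \<Longrightarrow> u \<in> A \<and> v = u"
    proof -
      assume "\<alpha>2 < 2"
      then have "b = 0" using e3 p by simp
      then have "closest_point A u = u" unfolding b_def by simp
      then have "u \<in> A" using proj_basic(3)[OF A, of u] by simp
      then show ?thesis unfolding v_def R2_def using rproj_self by blast
    qed
    show "w \<in> A \<inter> B"
    proof (cases "\<alpha>1 < 2")
      case True
      note wb = wB[OF True]
      show ?thesis
      proof (cases "\<alpha>2 < 2")
        case True
        then show ?thesis using uA wb by auto
      next
        case False
        then have "\<alpha> < 1" using c \<open>\<alpha>2 \<le> 2\<close> by auto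
        then have "R2 w = w" using dv wb unfolding v_def by simp
        then have "w \<in> A" using rproj_fixD[OF A, of \<alpha>2 w] p unfolding R2_def by simp
        then show ?thesis using wb by auto
      qed
    next
      case False
      then have al: "\<alpha> < 1" "\<alpha>2 < 2" using c p by auto
      then have "u = w" using dv uA by auto
      then have "R1 w = w" "w \<in> A" using uA al unfolding u_def by auto
      then have "w \<in> B" using rproj_fixD[OF B, of \<alpha>1 w] p unfolding R1_def by simp
      then show ?thesis using \<open>w \<in> A\<close> by auto
    qed
  qed
  have fixF: "S w = w" if w: "w \<in> A \<inter> B" for w
  proof -
    have "R1 w = w" "R2 w = w" using w rproj_self unfolding R1_def R2_def by blast+
    then have "S w = (1 - \<alpha>) *\<^sub>R w + \<alpha> *\<^sub>R w" using Sd[of w] by simp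
    also have "\<dots> = w" by (simp add: scaleR_left_distrib[symmetric])
    finally show ?thesis .
  qed
  have FS: "A \<inter> B = fixset S"
  proof (rule set_eqI)
    fix w
    have "w \<in> A \<inter> B \<Longrightarrow> S w = w" by (rule fixF)
    moreover have "S w = w \<Longrightarrow> w \<in> A \<inter> B" by (rule key) simp
    ultimately show "w \<in> A \<inter> B \<longleftrightarrow> w \<in> fixset S" unfolding fixset_def mem_Collect_eq by blast
  qed
  define F where "F = A \<inter> B"
  have Fs: "subspace F" unfolding F_def using subspace_inter A B by blast
  define V where "V = {w. \<forall>f\<in>F. inner w f = 0}"
  have Vsc: "w \<in> V \<Longrightarrow> r *\<^sub>R w \<in> V" for w r unfolding V_def by simp
  have SV: "w \<in> V \<Longrightarrow> S w \<in> V" for w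
  proof -
    assume w: "w \<in> V"
    have "inner (S w) f = 0" if f: "f \<in> F" for f
    proof -
      have "inner (R2 (R1 w)) f = inner w f"
        using f rproj_inner[OF A, of f] rproj_inner[OF B, of f] unfolding F_def R1_def R2_def by auto
      then show ?thesis using w f unfolding Sd V_def by (simp add: inner_add_left)
    qed
    then show "S w \<in> V" unfolding V_def by auto
  qed
  have strict: "w \<in> V \<Longrightarrow> w \<noteq> 0 \<Longrightarrow> norm (S w) < norm w" for w
  proof (rule ccontr)
    assume w: "w \<in> V" "w \<noteq> 0" "\<not> norm (S w) < norm w"
    then have "norm (S w) = norm w" using normle[of w] by simp
    then have "w \<in> F" using key unfolding F_def by blast
    then have "inner w w = 0" using w(1) unfolding V_def by blast
    then show False using w(2) by simp
  qed
  have clV: "closed V"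
  proof -
    have "V = (\<Inter>f\<in>F. {w. inner f w = 0})" unfolding V_def by (auto simp: inner_commute)
    then show ?thesis by (simp add: closed_INT closed_hyperplane)
  qed
  have contS: "continuous_on UNIV S"
    using linS by (simp add: linear_continuous_on linear_conv_bounded_linear)
  obtain c where c0: "0 \<le> c" "c < 1" and cb: "\<And>w. w \<in> V \<Longrightarrow> norm (S w) \<le> c * norm w"
  proof (cases "V \<inter> sphere 0 1 = {}")
    case True
    have "w = 0" if "w \<in> V" for w
    proof (rule ccontr)
      assume "w \<noteq> 0"
      then have "(1 / norm w) *\<^sub>R w \<in> V \<inter> sphere 0 1" using Vsc[OF that] by simp
      then show False using True by blast
    qed
    then show ?thesis using that[of 0] linear_0[OF linS] by auto
  next
    case False
    have "compact (V \<inter> sphere 0 1)" using clV by (intro closed_Int_compact) auto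
    then obtain z where z: "z \<in> V \<inter> sphere 0 1" and zm: "\<And>y. y \<in> V \<inter> sphere 0 1 \<Longrightarrow> norm (S y) \<le> norm (S z)"
      using continuous_attains_sup[of "V \<inter> sphere 0 1" "\<lambda>y. norm (S y)"] False
        continuous_on_subset[OF contS] continuous_on_norm by (metis subset_UNIV)
    have zV: "z \<in> V" "norm z = 1" using z by auto
    then have "z \<noteq> 0" by auto
    then have zl: "norm (S z) < 1" using strict[OF zV(1)] zV(2) by simp
    have "norm (S w) \<le> norm (S z) * norm w" if w: "w \<in> V" for w
    proof (cases "w = 0")
      case True then show ?thesis using linear_0[OF linS] by simp
    next
      case False
      then have "(1 / norm w) *\<^sub>R w \<in> V \<inter> sphere 0 1" using Vsc[OF w] by simp
      then have "norm (S ((1 / norm w) *\<^sub>R w)) \<le> norm (S z)" by (rule zm)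
      then have "norm (S w) / norm w \<le> norm (S z)" using linear_scale[OF linS] by simp
      then show ?thesis using False by (simp add: field_simps)
    qed
    then show ?thesis using that[of "norm (S z)"] zl by auto
  qed
  have iter: "w \<in> V \<Longrightarrow> (S ^^ j) w \<in> V \<and> norm ((S ^^ j) w) \<le> c ^ j * norm w" for w j
  proof (induction j)
    case 0 then show ?case by simp
  next
    case (Suc j)
    then have i: "(S ^^ j) w \<in> V" "norm ((S ^^ j) w) \<le> c ^ j * norm w" by auto
    have "norm ((S ^^ Suc j) w) \<le> c * norm ((S ^^ j) w)" using cb[OF i(1)] by simp
    also have "\<dots> \<le> c * (c ^ j * norm w)" using i(2) c0 by (simp add: mult_left_mono)
    finally show ?case using SV[OF i(1)] by simp
  qed
  have conv: "(\<lambda>j. (S ^^ j) x) \<longlonglongrightarrow> closest_point (fixset S) x" for x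
  proof -
    define pp where "pp = closest_point F x"
    define w0 where "w0 = x - pp"
    have ppF: "pp \<in> F" unfolding pp_def using proj_basic(3)[OF Fs] .
    have w0V: "w0 \<in> V" unfolding V_def w0_def pp_def using proj_orth[OF Fs] by blast
    have Spp: "S pp = pp" using fixF ppF unfolding F_def by blast
    have dec: "(S ^^ j) x = (S ^^ j) w0 + pp" for j
    proof (induction j)
      case 0 then show ?case unfolding w0_def by simp
    next
      case (Suc j) then show ?case using linear_add[OF linS] Spp by simp
    qed
    have "(\<lambda>j. (S ^^ j) w0) \<longlonglongrightarrow> 0"
    proof (rule Lim_null_comparison)
      show "\<forall>\<^sub>F j in sequentially. norm ((S ^^ j) w0) \<le> c ^ j * norm w0"
        using iter[OF w0V] by simp
      show "(\<lambda>j. c ^ j * norm w0) \<longlonglongrightarrow> 0"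
        using c0 by (intro tendsto_mult_left_zero LIMSEQ_power_zero) simp
    qed
    then have "(\<lambda>j. (S ^^ j) w0 + pp) \<longlonglongrightarrow> 0 + pp" by (intro tendsto_add) auto
    then show ?thesis using dec FS unfolding pp_def F_def by simp
  qed
  show ?thesis using FS conv by blast
qed


lemma tangent_subspace:
  assumes "k \<ge> 2" "local_manifold_rep k M F U x"
  shows "subspace (tangent_space F x)"
proof -
  obtain k' where k: "k = Suc k'" using assms(1) by (cases k) auto
  have "F differentiable (at x)" using assms(2) unfolding local_manifold_rep_def k by auto
  then have l: "linear (frechet_derivative F (at x))" by (rule linear_frechet_derivative)
  show ?thesis unfolding tangent_space_def subspace_def
    using linear_0[OF l] linear_add[OF l] linear_scale[OF l] by auto
qed

theorem proposition3:
  fixes M N :: "'a::euclidean_space set" and xbar :: 'a and k :: nat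
    and FM :: "'a \<Rightarrow> 'b::euclidean_space" and FN :: "'a \<Rightarrow> 'c::euclidean_space"
    and FMN :: "'a \<Rightarrow> 'd::euclidean_space"
    and UM UNN UMN :: "'a set"
    and \<alpha> \<alpha>1 \<alpha>2 :: real
    and S :: "'a \<Rightarrow> 'a"
  assumes "k \<ge> 2"
    and "xbar \<in> M \<inter> N"
    and "local_manifold_rep k M FM UM xbar"
    and "local_manifold_rep k N FN UNN xbar"
    and "local_manifold_rep k (M \<inter> N) FMN UMN xbar"
    and "tangent_space FMN xbar = tangent_space FM xbar \<inter> tangent_space FN xbar"
    and "0 < \<alpha>" "\<alpha> \<le> 1" "0 < \<alpha>1" "\<alpha>1 \<le> 2" "0 < \<alpha>2" "\<alpha>2 \<le> 2"
    and "(\<alpha>1 < 2 \<and> \<alpha>2 < 2) \<or> (\<alpha> < 1 \<and> (\<alpha>1 \<noteq> 2 \<or> \<alpha>2 \<noteq> 2))"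
    and "S = (\<lambda>x. (1 - \<alpha>) *\<^sub>R x + \<alpha> *\<^sub>R
               rproj \<alpha>2 (tangent_space FM xbar) (rproj \<alpha>1 (tangent_space FN xbar) x))"
  shows "tangent_space FMN xbar = tangent_space FM xbar \<inter> tangent_space FN xbar
       \<and> tangent_space FM xbar \<inter> tangent_space FN xbar = fixset S
       \<and> (\<forall>x. (\<lambda>j. (S ^^ j) x) \<longlonglongrightarrow> closest_point (fixset S) x)"
  proof -
  have A: "subspace (tangent_space FM xbar)" using tangent_subspace assms(1,3) by blast
  have B: "subspace (tangent_space FN xbar)" using tangent_subspace assms(1,4) by blast
  have m: "tangent_space FM xbar \<inter> tangent_space FN xbar = fixset S \<and>
     (\<forall>x. (\<lambda>j. (S ^^ j) x) \<longlonglongrightarrow> closest_point (fixset S) x)"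
    by (rule main_abstract[OF A B assms(7-14)])
  show ?thesis using m assms(6) by (intro conjI) simp_all
qed

end
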